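(* For every $\theta\in\mathbb R$ there exists a unique $\tau^\star=\tau^\star(\theta)\in(-x_u,x_q)$ such that $s_1(\theta,\tau^\star)=s_2(\theta,\tau^\star)$. (The paper calls $\tau^\star$ the equalizing prejudice and $s(\tau^\star):=s_1(\theta,\tau^\star)=s_2(\theta,\tau^\star)$ the equalized score.)
   Context: Setup. Let $Q\in\{0,1\}$ be a random variable with $\mathbb P(Q=1)=\pi\in(0,1)$, and let $(\Theta,\Gamma)$ be a real-valued random vector whose conditional joint density given $Q=1$ is $h_q(\theta,\gamma)$ and given $Q=0$ is $h_u(\theta,\gamma)$, both strictly positive on $\mathbb R^2$ (so $\Theta,\Gamma$ are continuous random variables and the conditional law of $\Gamma$ given $\Theta=\theta$, also given $Q$, has full support). Monotone likelihood ratio assumption: $l(\theta,\gamma)=h_q(\theta,\gamma)/h_u(\theta,\gamma)$ is continuous and strictly increasing in each of $\theta$ and $\gamma$, and for each $\theta$ the map $\gamma\mapsto l(\theta,\gamma)$ has infimum $0$ and supremum $+\infty$. Fix payoffs $x_q>0$, $x_u>0$. For a prejudice level $\tau\in(-x_u,x_q)$ let $A(\tau)=\mathbb 1\{l(\Theta,\Gamma)>\frac{(1-\pi)(x_u+\tau)}{\pi(x_q-\tau)}\}$ (equivalently, with $\kappa(\theta,\gamma)=\mathbb P(Q=1\mid\Theta=\theta,\Gamma=\gamma)$, accept iff $\kappa x_q-(1-\kappa)x_u>\tau$). Define the scores $s_1(\theta,\tau)=\mathbb E[Q\mid\Theta=\theta,A(\tau)=1]$ and $s_2(\theta,\tau)=\mathbb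 E[A(\tau)\mid\Theta=\theta]=\mathbb P(A(\tau)=1\mid\Theta=\theta)$. Write $\phi(\theta)=\mathbb P(Q=1\mid\Theta=\theta)$. *)

theory Defs
  imports "HOL-Analysis.Analysis"
begin

definition lr :: "(real \<Rightarrow> real \<Rightarrow> real) \<Rightarrow> (real \<Rightarrow> real \<Rightarrow> real) \<Rightarrow> real \<Rightarrow> real \<Rightarrow> real" where
  "lr hq hu t g = hq t g / hu t g"

definition acc_thr :: "real \<Rightarrow> real \<Rightarrow> real \<Rightarrow> real \<Rightarrow> real" where
  "acc_thr p xq xu tau = ((1 - p) * (xu + tau)) / (p * (xq - tau))"

definition acc_set :: "(real \<Rightarrow> real \<Rightarrow> real) \<Rightarrow> (real \<Rightarrow> real \<Rightarrow> real) \<Rightarrow> real \<Rightarrow> real \<Rightarrow> real \<Rightarrow> real \<Rightarrow> real \<Rightarrow> real set" where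
  "acc_set hq hu p xq xu t tau = {g. acc_thr p xq xu tau < lr hq hu t g}"

definition acc_mass :: "(real \<Rightarrow> real \<Rightarrow> real) \<Rightarrow> (real \<Rightarrow> real \<Rightarrow> real) \<Rightarrow> (real \<Rightarrow> real \<Rightarrow> real) \<Rightarrow> real \<Rightarrow> real \<Rightarrow> real \<Rightarrow> real \<Rightarrow> real \<Rightarrow> real" where
  "acc_mass h hq hu p xq xu t tau =
     (\<integral>g. h t g * indicator (acc_set hq hu p xq xu t tau) g \<partial>lborel)"

text \<open>s1(theta,tau) = E[Q | Theta = theta, A(tau) = 1], via Bayes' rule with the densities.\<close>
definition score1 :: "real \<Rightarrow> (real \<Rightarrow> real \<Rightarrow> real) \<Rightarrow> (real \<Rightarrow> real \<Rightarrow> real) \<Rightarrow> real \<Rightarrow> real \<Rightarrow> real \<Rightarrow> real \<Rightarrow> real" where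
  "score1 p hq hu xq xu t tau =
     p * acc_mass hq hq hu p xq xu t tau /
     (p * acc_mass hq hq hu p xq xu t tau + (1 - p) * acc_mass hu hq hu p xq xu t tau)"

text \<open>s2(theta,tau) = P(A(tau) = 1 | Theta = theta), via the densities.\<close>
definition score2 :: "real \<Rightarrow> (real \<Rightarrow> real \<Rightarrow> real) \<Rightarrow> (real \<Rightarrow> real \<Rightarrow> real) \<Rightarrow> real \<Rightarrow> real \<Rightarrow> real \<Rightarrow> real \<Rightarrow> real" where
  "score2 p hq hu xq xu t tau =
     (p * acc_mass hq hq hu p xq xu t tau + (1 - p) * acc_mass hu hq hu p xq xu t tau) /
     (p * (\<integral>g. hq t g \<partial>lborel) + (1 - p) * (\<integral>g. hu t g \<partial>lborel))"

end

theory Submission imports Defs begin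

definition T :: "(real \<Rightarrow> real) \<Rightarrow> real \<Rightarrow> real" where
  "T a c = (\<integral>x. a x * indicator {c<..} x \<partial>lborel)"

lemma T_int: fixes a :: "real \<Rightarrow> real" shows "integrable lborel a \<Longrightarrow> integrable lborel (\<lambda>x. a x * indicator {c<..} x)"
  by (rule integrable_real_mult_indicator) auto

lemma T_cont:
  fixes a :: "real \<Rightarrow> real"
  assumes a: "integrable lborel a"
  shows "continuous_on UNIV (T a)"
proof (rule continuous_on_sequentiallyI)
  fix u and c :: real assume u: "u \<longlonglongrightarrow> c"
  have am: "a \<in> borel_measurable lborel" using a by auto
  show "(\<lambda>n. T a (u n)) \<longlonglongrightarrow> T a c" unfolding T_def
  proof (rule integral_dominated_convergence[where w="\<lambda>x. \<bar>a x\<bar>"])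
    show "AE x in lborel. (\<lambda>n. a x * indicator {u n<..} x) \<longlonglongrightarrow> a x * indicator {c<..} x"
      using AE_lborel_singleton[of c]
    proof eventually_elim
      fix x :: real assume "x \<noteq> c"
      then consider "x < c" | "c < x" by linarith
      then show "(\<lambda>n. a x * indicator {u n<..} x) \<longlonglongrightarrow> a x * indicator {c<..} x"
      proof cases
        case 1
        then have "eventually (\<lambda>n. x < u n) sequentially" using order_tendstoD(1)[OF u] by blast
        then have "eventually (\<lambda>n. a x * indicator {u n<..} x = a x * indicator {c<..} x) sequentially"
          by eventually_elim (use 1 in auto)
        then show ?thesis by (rule tendsto_eventually)
      next
        case 2
        then have "eventually (\<lambda>n. u n < x) sequentially" using order_tendstoD(2)[OF u] by blast
        then have "eventually (\<lambda>n. a x * indicator {u n<..} x = a x * indicator {c<..} x) sequentially"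
          by eventually_elim (use 2 in auto)
        then show ?thesis by (rule tendsto_eventually)
      qed
    qed
  qed (use a am in \<open>auto split: split_indicator\<close>)
qed

lemma T_top:
  fixes a :: "real \<Rightarrow> real"
  assumes a: "integrable lborel a"
  shows "(T a \<longlongrightarrow> 0) at_top"
proof -
  have am: "a \<in> borel_measurable lborel" using a by auto
  have "((\<lambda>c. \<integral>x. a x * indicator {c<..} x \<partial>lborel) \<longlongrightarrow> (integral\<^sup>L (lborel::real measure) (\<lambda>x. 0))) at_top"
  proof (rule integral_dominated_convergence_at_top[where w="\<lambda>x. \<bar>a x\<bar>"])
    show "AE x in lborel. ((\<lambda>c. a x * indicator {c<..} x) \<longlongrightarrow> 0) at_top"
    proof (rule AE_I2)
      fix x :: real
      have "eventually (\<lambda>c. a x * indicator {c<..} x = 0) at_top"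
        using eventually_ge_at_top[of x] by eventually_elim auto
      then show "((\<lambda>c. a x * indicator {c<..} x) \<longlongrightarrow> 0) at_top" by (rule tendsto_eventually)
    qed
  qed (use a am in \<open>auto split: split_indicator\<close>)
  then show ?thesis unfolding T_def[abs_def] by simp
qed

lemma T_bot:
  fixes a :: "real \<Rightarrow> real"
  assumes a: "integrable lborel a"
  shows "(T a \<longlongrightarrow> (\<integral>x. a x \<partial>lborel)) at_bot"
proof -
  have am: "a \<in> borel_measurable lborel" using a by auto
  have "((\<lambda>c. \<integral>x. a x * indicator {-c<..} x \<partial>lborel) \<longlongrightarrow> (\<integral>x. a x \<partial>lborel)) at_top"
  proof (rule integral_dominated_convergence_at_top[where w="\<lambda>x. \<bar>a x\<bar>"])
    show "AE x in lborel. ((\<lambda>c. a x * indicator {-c<..} x) \<longlongrightarrow> a x) at_top"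
    proof (rule AE_I2)
      fix x :: real
      have "eventually (\<lambda>c. a x * indicator {-c<..} x = a x) at_top"
        using eventually_gt_at_top[of "-x"] by eventually_elim auto
      then show "((\<lambda>c. a x * indicator {-c<..} x) \<longlongrightarrow> a x) at_top" by (rule tendsto_eventually)
    qed
  qed (use a am in \<open>auto split: split_indicator\<close>)
  then show ?thesis unfolding T_def[abs_def] filterlim_at_bot_mirror by simp
qed

lemma T_diff:
  fixes a :: "real \<Rightarrow> real"
  assumes a: "integrable lborel a" and "c1 \<le> c2"
  shows "T a c1 - T a c2 = (\<integral>x. a x * indicator {c1<..c2} x \<partial>lborel)"
proof -
  have "T a c1 - T a c2 = (\<integral>x. a x * indicator {c1<..} x - a x * indicator {c2<..} x \<partial>lborel)"
    unfolding T_def by (rule Bochner_Integration.integral_diff[symmetric]) (use T_int[OF a] in auto)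
  also have "\<dots> = (\<integral>x. a x * indicator {c1<..c2} x \<partial>lborel)"
    by (rule Bochner_Integration.integral_cong) (use assms(2) in \<open>auto split: split_indicator\<close>)
  finally show ?thesis .
qed

lemma pos_int:
  fixes a :: "real \<Rightarrow> real"
  assumes a: "integrable lborel a" and pos: "\<And>x. 0 < a x" and "c1 < c2"
  shows "0 < (\<integral>x. a x * indicator {c1<..c2} x \<partial>lborel)"
proof -
  have i: "integrable lborel (\<lambda>x. a x * indicator {c1<..c2} x)"
    by (rule integrable_real_mult_indicator) (use a in auto)
  have nn: "AE x in lborel. 0 \<le> a x * indicator {c1<..c2} x"
    using pos by (auto intro!: AE_I2 simp: less_imp_le split: split_indicator)
  have "0 \<le> (\<integral>x. a x * indicator {c1<..c2} x \<partial>lborel)"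
    using nn by (rule integral_nonneg_AE)
  moreover have "(\<integral>x. a x * indicator {c1<..c2} x \<partial>lborel) \<noteq> 0"
  proof
    assume "(\<integral>x. a x * indicator {c1<..c2} x \<partial>lborel) = 0"
    then have "AE x in lborel. a x * indicator {c1<..c2} x = 0"
      using integral_nonneg_eq_0_iff_AE[OF i nn] by simp
    moreover have "(AE x in lborel. a x * indicator {c1<..c2} x = 0) \<longleftrightarrow> emeasure lborel {c1<..c2} = 0"
      by (rule AE_iff_measurable) (use pos in \<open>auto split: split_indicator simp: less_imp_neq[symmetric]\<close>)
    ultimately show False using \<open>c1 < c2\<close> by simp
  qed
  ultimately show ?thesis by simp
qed

lemma T_nonneg:
  fixes a :: "real \<Rightarrow> real"
  assumes pos: "\<And>x. 0 < a x"
  shows "0 \<le> T a c"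
  unfolding T_def by (rule integral_nonneg_AE) (use pos in \<open>auto intro!: AE_I2 simp: less_imp_le split: split_indicator\<close>)

lemma T_pos:
  fixes a :: "real \<Rightarrow> real"
  assumes a: "integrable lborel a" and pos: "\<And>x. 0 < a x"
  shows "0 < T a c"
  using T_diff[OF a, of c "c+1"] pos_int[of a c "c+1", OF a pos] T_nonneg[of a "c+1", OF pos] by simp

lemma T_strict:
  fixes a :: "real \<Rightarrow> real"
  assumes a: "integrable lborel a" and pos: "\<And>x. 0 < a x" and "c1 < c2"
  shows "T a c2 < T a c1"
  using T_diff[OF a, of c1 c2] pos_int[of a c1 c2, OF a pos] assms(3) by simp

lemma I_pos:
  fixes a :: "real \<Rightarrow> real"
  assumes a: "integrable lborel a" and pos: "\<And>x. 0 < a x"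
  shows "T a c \<le> (\<integral>x. a x \<partial>lborel)"
  unfolding T_def by (rule integral_mono) (use a T_int[OF a] pos in \<open>auto simp: less_imp_le split: split_indicator\<close>)

lemma mlr:
  fixes a b :: "real \<Rightarrow> real"
  assumes a: "integrable lborel a" and b: "integrable lborel b"
    and apos: "\<And>x. 0 < a x" and bpos: "\<And>x. 0 < b x"
    and r: "\<And>x y. x \<le> y \<Longrightarrow> a x / b x \<le> a y / b y"
    and c: "c1 \<le> c2"
  shows "T b c2 * T a c1 \<le> T b c1 * T a c2"
proof -
  define L where "L = a c2 / b c2"
  define Qd where "Qd = (\<integral>x. a x * indicator {c1<..c2} x \<partial>lborel)"
  define Ud where "Ud = (\<integral>x. b x * indicator {c1<..c2} x \<partial>lborel)"
  have L: "0 < L" unfolding L_def using apos bpos by simp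
  have Q1: "T a c1 = T a c2 + Qd" using T_diff[OF a c] unfolding Qd_def by simp
  have U1: "T b c1 = T b c2 + Ud" using T_diff[OF b c] unfolding Ud_def by simp
  have ib: "integrable lborel (\<lambda>x. b x * indicator {c1<..c2} x)"
    by (rule integrable_real_mult_indicator) (use b in auto)
  have ia: "integrable lborel (\<lambda>x. a x * indicator {c1<..c2} x)"
    by (rule integrable_real_mult_indicator) (use a in auto)
  have le1: "a x \<le> L * b x" if "x \<le> c2" for x
  proof -
    have "a x / b x \<le> L" using r[OF that] unfolding L_def .
    then show ?thesis using bpos[of x] by (simp add: divide_le_eq)
  qed
  have ge1: "L * b x \<le> a x" if "c2 \<le> x" for x
  proof -
    have "L \<le> a x / b x" using r[OF that] unfolding L_def .
    then show ?thesis using bpos[of x] by (simp add: le_divide_eq)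
  qed
  have "Qd \<le> (\<integral>x. L * (b x * indicator {c1<..c2} x) \<partial>lborel)"
    unfolding Qd_def by (rule integral_mono) (use ia ib le1 in \<open>auto split: split_indicator\<close>)
  also have "\<dots> = L * Ud" unfolding Ud_def by simp
  finally have Qd: "Qd \<le> L * Ud" .
  have "L * T b c2 = (\<integral>x. L * (b x * indicator {c2<..} x) \<partial>lborel)" unfolding T_def by simp
  also have "\<dots> \<le> T a c2"
    unfolding T_def by (rule integral_mono) (use T_int[OF a] T_int[OF b] ge1 in \<open>auto split: split_indicator\<close>)
  finally have Q2: "L * T b c2 \<le> T a c2" .
  have Ud0: "0 \<le> Ud" unfolding Ud_def by (rule integral_nonneg_AE) (use bpos in \<open>auto intro!: AE_I2 simp: less_imp_le split: split_indicator\<close>)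
  have Tb0: "0 \<le> T b c2" by (rule T_nonneg[of b, OF bpos])
  have "T b c2 * Qd \<le> T b c2 * (L * Ud)" using Qd Tb0 by (rule mult_left_mono)
  also have "\<dots> = Ud * (L * T b c2)" by simp
  also have "\<dots> \<le> Ud * T a c2" using Q2 Ud0 by (rule mult_left_mono)
  finally have "T b c2 * Qd \<le> Ud * T a c2" .
  then show ?thesis unfolding Q1 U1 by (simp add: algebra_simps)
qed

lemma core:
  fixes a b :: "real \<Rightarrow> real" and p :: real
  assumes a: "integrable lborel a" and b: "integrable lborel b"
    and apos: "\<And>x. 0 < a x" and bpos: "\<And>x. 0 < b x"
    and r: "\<And>x y. x \<le> y \<Longrightarrow> a x / b x \<le> a y / b y"
    and p: "0 < p" "p < 1"
  shows "\<exists>!c. p * T a c / (p * T a c + (1 - p) * T b c) =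
     (p * T a c + (1 - p) * T b c) / (p * (\<integral>x. a x \<partial>lborel) + (1 - p) * (\<integral>x. b x \<partial>lborel))"
proof -
  define IA where "IA = (\<integral>x. a x \<partial>lborel)"
  define IB where "IB = (\<integral>x. b x \<partial>lborel)"
  define N where "N c = p * T a c + (1 - p) * T b c" for c
  define D where "D = p * IA + (1 - p) * IB"
  define S1 where "S1 c = p * T a c / N c" for c
  define S2 where "S2 c = N c / D" for c
  define F where "F c = S2 c - S1 c" for c
  have Ta: "0 < T a c" for c by (rule T_pos[OF a apos])
  have Tb: "0 < T b c" for c by (rule T_pos[OF b bpos])
  have IA: "0 < IA" using Ta[of 0] I_pos[OF a apos, of 0] unfolding IA_def by simp
  have IB: "0 < IB" using Tb[of 0] I_pos[OF b bpos, of 0] unfolding IB_def by simp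
  have Npos: "0 < N c" for c unfolding N_def using Ta[of c] Tb[of c] p by (intro add_pos_pos mult_pos_pos) auto
  have Dpos: "0 < D" unfolding D_def using IA IB p by (intro add_pos_pos mult_pos_pos) auto
  have Ndec: "N c2 < N c1" if "c1 < c2" for c1 c2
    unfolding N_def using T_strict[OF a apos that] T_strict[OF b bpos that] p
    by (intro add_strict_mono mult_strict_left_mono) auto
  have S1mono: "S1 c1 \<le> S1 c2" if "c1 \<le> c2" for c1 c2
  proof -
    have m: "T b c2 * T a c1 \<le> T b c1 * T a c2" by (rule mlr[OF a b apos bpos r that])
    have "p * T a c1 * N c2 \<le> p * T a c2 * N c1"
    proof -
      have "p * T a c1 * N c2 = p*p * T a c1 * T a c2 + p * (1-p) * (T b c2 * T a c1)"
        unfolding N_def by (simp add: algebra_simps)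
      also have "\<dots> \<le> p*p * T a c1 * T a c2 + p * (1-p) * (T b c1 * T a c2)"
        using m p by (intro add_left_mono mult_left_mono) auto
      also have "\<dots> = p * T a c2 * N c1" unfolding N_def by (simp add: algebra_simps)
      finally show ?thesis .
    qed
    then show ?thesis unfolding S1_def using Npos[of c1] Npos[of c2] by (simp add: divide_simps)
  qed
  have Fdec: "F c2 < F c1" if "c1 < c2" for c1 c2
  proof -
    have "S2 c2 < S2 c1" unfolding S2_def using Ndec[OF that] Dpos by (simp add: divide_strict_right_mono)
    then show ?thesis unfolding F_def using S1mono[of c1 c2] that by simp
  qed
  have Tac: "continuous_on UNIV (T a)" by (rule T_cont[OF a])
  have Tbc: "continuous_on UNIV (T b)" by (rule T_cont[OF b])
  have Nc: "continuous_on UNIV N" unfolding N_def[abs_def]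
    by (intro continuous_intros Tac Tbc)
  have Fc: "continuous_on UNIV F" unfolding F_def[abs_def] S1_def[abs_def] S2_def[abs_def]
    using Npos Dpos by (intro continuous_intros Tac Nc) (auto simp: less_imp_neq[symmetric])
  have "((\<lambda>c. N c) \<longlongrightarrow> p * IA + (1 - p) * IB) at_bot"
    unfolding N_def IA_def IB_def by (intro tendsto_intros T_bot[OF a] T_bot[OF b])
  then have limbot: "(F \<longlongrightarrow> D / D - p * IA / D) at_bot"
    unfolding F_def[abs_def] S1_def[abs_def] S2_def[abs_def] D_def[symmetric]
    using Dpos by (intro tendsto_intros T_bot[OF a, folded IA_def]) auto
  have "p * IA / D < D / D" using Dpos IB p unfolding D_def by (simp add: divide_strict_right_mono)
  then have "eventually (\<lambda>c. 0 < F c) at_bot"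
    using order_tendstoD(1)[OF limbot, of 0] by simp
  then obtain M0 where "\<forall>n\<le>M0. 0 < F n" unfolding eventually_at_bot_linorder by blast
  then obtain c0 where c0: "0 < F c0" by blast
  have "((\<lambda>c. N c) \<longlongrightarrow> p * 0 + (1 - p) * 0) at_top"
    unfolding N_def by (intro tendsto_intros T_top[OF a] T_top[OF b])
  then have "(S2 \<longlongrightarrow> 0 / D) at_top"
    unfolding S2_def[abs_def] using Dpos by (intro tendsto_intros) auto
  moreover have S10: "0 < S1 0" unfolding S1_def using Ta[of 0] Npos[of 0] p by simp
  ultimately have "eventually (\<lambda>c. S2 c < S1 0) at_top"
    using order_tendstoD(2)[of S2 "0/D" at_top "S1 0"] by simp
  then have "eventually (\<lambda>c. S2 c < S1 0 \<and> 0 \<le> c) at_top"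
    using eventually_ge_at_top[of 0] by eventually_elim auto
  then obtain M where "\<forall>n\<ge>M. S2 n < S1 0 \<and> 0 \<le> n" unfolding eventually_at_top_linorder by blast
  then obtain c1 where c1: "S2 c1 < S1 0" "0 \<le> c1" by blast
  have F1: "F c1 < 0" unfolding F_def using c1 S1mono[OF c1(2)] by simp
  have "c0 \<le> c1"
  proof (rule ccontr)
    assume "\<not> c0 \<le> c1" then have "F c0 < F c1" using Fdec by simp
    then show False using c0 F1 by simp
  qed
  have "continuous_on {c0..c1} F" using continuous_on_subset[OF Fc] by blast
  then obtain c where "F c = 0" using IVT2'[of F c1 0 c0] F1 c0 \<open>c0 \<le> c1\<close> by force
  moreover have "c' = c" if "F c' = 0" for c'
    using Fdec[of c c'] Fdec[of c' c] \<open>F c = 0\<close> that by (metis less_irrefl linorder_neqE_linordered_idom)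
  ultimately have "\<exists>!c. F c = 0" by blast
  moreover have "F c = 0 \<longleftrightarrow> p * T a c / (p * T a c + (1 - p) * T b c) =
     (p * T a c + (1 - p) * T b c) / (p * (\<integral>x. a x \<partial>lborel) + (1 - p) * (\<integral>x. b x \<partial>lborel))" for c
    unfolding F_def S1_def S2_def N_def D_def IA_def IB_def by auto
  ultimately show ?thesis by simp
qed

lemma thr_pos:
  fixes p xq xu tau :: real
  assumes "0 < p" "p < 1" "-xu < tau" "tau < xq"
  shows "0 < acc_thr p xq xu tau"
  unfolding acc_thr_def using assms by (intro divide_pos_pos mult_pos_pos) auto

lemma thr_inj:
  fixes p xq xu t1 t2 :: real
  assumes "0 < p" "p < 1" "-xu < t1" "t1 < xq" "-xu < t2" "t2 < xq"
    and "acc_thr p xq xu t1 = acc_thr p xq xu t2"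
  shows "t1 = t2"
proof -
  have "(1 - p) * (xu + t1) * (p * (xq - t2)) = (1 - p) * (xu + t2) * (p * (xq - t1))"
    using assms unfolding acc_thr_def by (simp add: divide_simps split: if_splits)
  then have "(1 - p) * p * ((xu + t1) * (xq - t2)) = (1 - p) * p * ((xu + t2) * (xq - t1))"
    by (simp add: algebra_simps)
  then have "(xu + t1) * (xq - t2) = (xu + t2) * (xq - t1)" using assms by simp
  then have "(xu + xq) * (t1 - t2) = 0" by (simp add: algebra_simps)
  then show ?thesis using assms by simp
qed

lemma thr_surj:
  fixes p xq xu L :: real
  assumes p: "0 < p" "p < 1" and xq: "0 < xq" and xu: "0 < xu" and L: "0 < L"
  shows "\<exists>tau. -xu < tau \<and> tau < xq \<and> acc_thr p xq xu tau = L"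
proof (intro exI conjI)
  define tau where "tau = (L * p * xq - (1 - p) * xu) / ((1 - p) + L * p)"
  have d: "0 < (1 - p) + L * p" using p L by (simp add: add_pos_pos)
  show "-xu < tau" unfolding tau_def using d p L xq xu
    by (simp add: field_simps) (simp add: algebra_simps add_pos_pos)
  have pq: "p * xq + p * xu < xq + xu"
    using mult_strict_right_mono[of p 1 "xq+xu"] p xq xu by (simp add: distrib_left)
  show "tau < xq" unfolding tau_def using d p L xq xu pq
    by (simp add: field_simps)
  have e1: "xu + tau = L * p * (xq + xu) / ((1 - p) + L * p)"
    unfolding tau_def using d by (simp add: field_simps)
  have e2: "xq - tau = (1 - p) * (xq + xu) / ((1 - p) + L * p)"
    unfolding tau_def using d by (simp add: field_simps)
  have s: "0 < xq + xu" using xq xu by simp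
  show "acc_thr p xq xu tau = L"
    unfolding acc_thr_def e1 e2 using d p s by simp
qed



theorem mainTheorem1:
  fixes p xq xu :: real and hq hu :: "real \<Rightarrow> real \<Rightarrow> real"
  assumes p: "0 < p" "p < 1"
    and xq: "0 < xq" and xu: "0 < xu"
    and hq_pos: "\<And>t g. 0 < hq t g" and hu_pos: "\<And>t g. 0 < hu t g"
    and hq_meas: "(\<lambda>z. hq (fst z) (snd z)) \<in> borel_measurable (lborel \<Otimes>\<^sub>M lborel)"
    and hu_meas: "(\<lambda>z. hu (fst z) (snd z)) \<in> borel_measurable (lborel \<Otimes>\<^sub>M lborel)"
    and hq_dens: "(\<integral>z. hq (fst z) (snd z) \<partial>(lborel \<Otimes>\<^sub>M lborel)) = 1"
    and hu_dens: "(\<integral>z. hu (fst z) (snd z) \<partial>(lborel \<Otimes>\<^sub>M lborel)) = 1"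
    and hq_int2: "integrable (lborel \<Otimes>\<^sub>M lborel) (\<lambda>z. hq (fst z) (snd z))"
    and hu_int2: "integrable (lborel \<Otimes>\<^sub>M lborel) (\<lambda>z. hu (fst z) (snd z))"
    and hq_sec: "\<And>t. integrable lborel (hq t)"
    and hu_sec: "\<And>t. integrable lborel (hu t)"
    and l_cont: "continuous_on UNIV (\<lambda>z. lr hq hu (fst z) (snd z))"
    and l_mono1: "\<And>g. strict_mono (\<lambda>t. lr hq hu t g)"
    and l_mono2: "\<And>t. strict_mono (lr hq hu t)"
    and l_inf: "\<And>t. (INF g. lr hq hu t g) = 0"
    and l_sup: "\<And>t. \<not> bdd_above (range (lr hq hu t))"
  shows "\<forall>t. \<exists>!tau. -xu < tau \<and> tau < xq \<and>
            score1 p hq hu xq xu t tau = score2 p hq hu xq xu t tau"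
  proof (intro allI)
  fix t
  define a where "a = hq t"
  define b where "b = hu t"
  define r where "r = lr hq hu t"
  have rdef: "r g = a g / b g" for g by (simp add: r_def lr_def a_def b_def)
  have a: "integrable lborel a" unfolding a_def by (rule hq_sec)
  have b: "integrable lborel b" unfolding b_def by (rule hu_sec)
  have apos: "0 < a x" for x unfolding a_def by (rule hq_pos)
  have bpos: "0 < b x" for x unfolding b_def by (rule hu_pos)
  have rsm: "strict_mono r" unfolding r_def by (rule l_mono2)
  have rmono: "a x / b x \<le> a y / b y" if "x \<le> y" for x y
    using strict_mono_less_eq[OF rsm] that by (simp add: rdef)
  have rpos: "0 < r g" for g using apos bpos by (simp add: rdef)
  have rcont: "continuous_on UNIV r"
  proof -
    have "continuous_on UNIV ((\<lambda>z. lr hq hu (fst z) (snd z)) \<circ> (\<lambda>g::real. (t, g)))"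
      by (intro continuous_on_compose continuous_intros) (rule continuous_on_subset[OF l_cont], simp)
    then show ?thesis by (simp add: o_def r_def)
  qed
  have cut: "\<exists>c. r c = L" if L: "0 < L" for L
  proof -
    have bb: "bdd_below (range r)" by (rule bdd_belowI[of _ 0]) (use rpos less_imp_le in auto)
    have "(INF g. r g) < L" using l_inf[of t] L unfolding r_def by simp
    then obtain g1 where g1: "r g1 < L" using cINF_less_iff[OF UNIV_not_empty bb] by auto
    have "\<not> bdd_above (range r)" using l_sup[of t] unfolding r_def .
    then obtain g2 where g2: "L < r g2"
      by (metis bdd_aboveI2 not_le)
    have "g1 \<le> g2"
    proof (rule ccontr)
      assume "\<not> g1 \<le> g2" then have "r g2 < r g1" using rsm by (simp add: strict_mono_less)
      then show False using g1 g2 by simp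
    qed
    moreover have "continuous_on {g1..g2} r" using continuous_on_subset[OF rcont] by blast
    ultimately obtain c where "r c = L" using IVT'[of r g1 L g2] g1 g2 by force
    then show ?thesis ..
  qed
  have accset: "acc_set hq hu p xq xu t tau = {c<..}" if "r c = acc_thr p xq xu tau" for c tau
    unfolding acc_set_def that[symmetric] r_def[symmetric]
    using strict_mono_less[OF rsm] by auto
  have sc: "(score1 p hq hu xq xu t tau = score2 p hq hu xq xu t tau) \<longleftrightarrow>
     (p * T a c / (p * T a c + (1 - p) * T b c) =
     (p * T a c + (1 - p) * T b c) / (p * (\<integral>x. a x \<partial>lborel) + (1 - p) * (\<integral>x. b x \<partial>lborel)))"
    if "acc_set hq hu p xq xu t tau = {c<..}" for c tau
    unfolding score1_def score2_def acc_mass_def that T_def a_def b_def by simp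
  obtain c0 where c0: "p * T a c0 / (p * T a c0 + (1 - p) * T b c0) =
     (p * T a c0 + (1 - p) * T b c0) / (p * (\<integral>x. a x \<partial>lborel) + (1 - p) * (\<integral>x. b x \<partial>lborel))"
    and c0u: "\<And>c. p * T a c / (p * T a c + (1 - p) * T b c) =
     (p * T a c + (1 - p) * T b c) / (p * (\<integral>x. a x \<partial>lborel) + (1 - p) * (\<integral>x. b x \<partial>lborel)) \<Longrightarrow> c = c0"
    using core[OF a b apos bpos rmono p] by blast
  obtain tau0 where tau0: "-xu < tau0" "tau0 < xq" "acc_thr p xq xu tau0 = r c0"
    using thr_surj[OF p xq xu rpos[of c0]] by blast
  have key: "acc_thr p xq xu tau = r c0" if tt: "-xu < tau" "tau < xq"
    "score1 p hq hu xq xu t tau = score2 p hq hu xq xu t tau" for tau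
  proof -
    obtain c where c: "r c = acc_thr p xq xu tau" using cut thr_pos[OF p tt(1,2)] by blast
    have "c = c0" using tt(3) sc[OF accset[OF c]] c0u by blast
    then show ?thesis using c by simp
  qed
  show "\<exists>!tau. -xu < tau \<and> tau < xq \<and>
            score1 p hq hu xq xu t tau = score2 p hq hu xq xu t tau"
  proof (rule ex1I[of _ tau0])
    show "-xu < tau0 \<and> tau0 < xq \<and> score1 p hq hu xq xu t tau0 = score2 p hq hu xq xu t tau0"
      using tau0 sc[OF accset[OF tau0(3)[symmetric]]] c0 by simp
  next
    fix tau assume "-xu < tau \<and> tau < xq \<and> score1 p hq hu xq xu t tau = score2 p hq hu xq xu t tau"
    then show "tau = tau0"
      using key[of tau] tau0 thr_inj[of p xu tau xq tau0, OF p] by auto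
  qed
qed

end
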